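(* Let $x,y$ be non-commuting indeterminates and $C=xyx^{-1}y^{-1}$. Let $(R_n)_{n\in\mathbb Z}$ satisfy $$R_{2n}CR_{2n-2}=1+R_{2n-1},\qquad R_{2n+1}CR_{2n-1}=1+R_{2n}^4\qquad(n\in\mathbb Z),$$ with $R_0=yxy^{-1}$ and $R_1=y$, and set $u_n=R_{2n}$, so that $u_0=yxy^{-1}$. Define $$y_1=(1+y)x^{-1}yx^{-1}y^{-1},$$ $$y_2=\big(x^2+(1+y)x^{-2}(1+y)\big)y^{-1}x^{-1}yx^{-1}y^{-1},$$ $$y_3=\big(x^3+(1+y)x^{-1}\big)x^{-1}y^{-1}.$$ Then, as formal power series in a central variable $t$, $$\sum_{n\ge0}t^nu_n=\Big(1-ty_1-t^2(1-ty_3)^{-1}y_2\Big)^{-1}u_0.$$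
   Context: Work in the free skew field (non-commutative rational functions) over $\mathbb C$ generated by $x,y$. The variable $t$ is a formal variable commuting with everything, and inverses of $1-(\text{terms of positive }t\text{-degree})$ are expanded as geometric series. *)

theory Defs
  imports Complex_Main "HOL-Computational_Algebra.Formal_Power_Series"
begin

text \<open>Free associative algebra C<x,y>: words over {x,y} are bool lists
  (False = x, True = y); an element is a finitely supported coefficient function.\<close>

type_synonym fa = "bool list \<Rightarrow> complex"

definition fa_poly :: "fa \<Rightarrow> bool" where
  "fa_poly p \<longleftrightarrow> finite {w. p w \<noteq> 0}"

definition fa_mult :: "fa \<Rightarrow> fa \<Rightarrow> fa" where
  "fa_mult p q = (\<lambda>w. \<Sum>k\<le>length w. p (take k w) * q (drop k w))"

definition word_eval :: "'a::ring_1 \<Rightarrow> 'a \<Rightarrow> bool list \<Rightarrow> 'a" where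
  "word_eval a b w = foldr (\<lambda>c r. (if c then b else a) * r) w 1"

definition fa_eval :: "(complex \<Rightarrow> 'a::ring_1) \<Rightarrow> 'a \<Rightarrow> 'a \<Rightarrow> fa \<Rightarrow> 'a" where
  "fa_eval \<phi> a b p = (\<Sum>w\<in>{w. p w \<noteq> 0}. \<phi> (p w) * word_eval a b w)"

definition fa_full :: "nat \<Rightarrow> (nat \<Rightarrow> nat \<Rightarrow> fa) \<Rightarrow> bool" where
  "fa_full n M \<longleftrightarrow> \<not> (\<exists>r<n. \<exists>P Q.
      (\<forall>i j. fa_poly (P i j)) \<and> (\<forall>i j. fa_poly (Q i j)) \<and>
      (\<forall>i<n. \<forall>j<n. (\<forall>w. M i j w = (\<Sum>k<r. fa_mult (P i k) (Q k j) w))))"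

definition mat_invertible :: "nat \<Rightarrow> (nat \<Rightarrow> nat \<Rightarrow> 'a::ring_1) \<Rightarrow> bool" where
  "mat_invertible n A \<longleftrightarrow> (\<exists>B.
      (\<forall>i<n. \<forall>j<n. (\<Sum>k<n. A i k * B k j) = (if i = j then 1 else 0)) \<and>
      (\<forall>i<n. \<forall>j<n. (\<Sum>k<n. B i k * A k j) = (if i = j then 1 else 0)))"

text \<open>Cohn's characterization: phi makes D a C-algebra (C central), and the
  induced map C<x,y> -> D is fully inverting, so the sub-division-ring of D
  generated by C, x, y is the free skew field on x, y.\<close>
definition free_skew_field :: "(complex \<Rightarrow> 'a::division_ring) \<Rightarrow> 'a \<Rightarrow> 'a \<Rightarrow> bool" where
  "free_skew_field \<phi> x y \<longleftrightarrow>
     (\<forall>a b. \<phi> (a + b) = \<phi> a + \<phi> b) \<and> (\<forall>a b. \<phi> (a * b) = \<phi> a * \<phi> b) \<and> \<phi> 1 = 1 \<and>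
     (\<forall>c d. \<phi> c * d = d * \<phi> c) \<and>
     (\<forall>n M. (\<forall>i<n. \<forall>j<n. fa_poly (M i j)) \<and> fa_full n M \<longrightarrow>
        mat_invertible n (\<lambda>i j. fa_eval \<phi> x y (M i j)))"

end

theory Submission
  imports Defs
begin

unbundle fps_syntax



lemma inv_l: "(a::'a::division_ring) \<noteq> 0 \<Longrightarrow> inverse a * (a * z) = z"
  by (simp add: mult.assoc[symmetric])
lemma inv_r: "(a::'a::division_ring) \<noteq> 0 \<Longrightarrow> a * (inverse a * z) = z"
  by (simp add: mult.assoc[symmetric])

lemma solve_r: "Y * W = (1::'a::ring_1) \<Longrightarrow> X * Y = Z \<Longrightarrow> X = Z * W"
  by (metis mult.assoc mult_1_right)
lemma solve_l: "W * Y = (1::'a::ring_1) \<Longrightarrow> Y * X = Z \<Longrightarrow> X = W * Z"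
  by (metis mult.assoc mult_1_left)

lemma KG:
  fixes p Q A B q c :: "'a::division_ring"
  assumes p: "p \<noteq> 0" and Q: "Q \<noteq> 0" and cQ: "p*Q = Q*c*p" and hA: "A*c*p = 1+Q"
    and hB: "p*c*B = 1+q" and hq: "Q*c*q = 1 + p^4"
  shows "(A + c*B) * inverse p = (1 + inverse Q) * inverse p * Q * inverse p
     + (1 + inverse Q) * (inverse p * inverse p) + inverse Q * (p*p)"
proof -
  have c: "c = inverse Q * p * Q * inverse p"
    using cQ p Q by (simp add: mult.assoc inv_l inv_r)
  have "A * (inverse Q * p * Q) = 1 + Q" using hA p by (simp add: c mult.assoc inv_l)
  then have A: "A = (1 + Q) * (inverse Q * inverse p * Q)"
    by (rule solve_r[rotated]) (simp add: mult.assoc inv_l inv_r p Q)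
  have cB: "c*B = inverse p * (1+q)"
    by (rule solve_l[of "inverse p" p]) (use hB p in \<open>simp_all add: mult.assoc\<close>)
  have "(p * Q * inverse p) * q = 1 + p^4" using hq Q p by (simp add: c mult.assoc inv_r)
  then have qq: "q = (p * inverse Q * inverse p) * (1 + p^4)"
    by (rule solve_l[rotated]) (simp add: mult.assoc inv_l inv_r p Q)
  show ?thesis
    using p Q unfolding A cB qq
    by (simp add: algebra_simps inv_l inv_r power4_eq_xxxx)
qed

lemma KG':
  fixes p Q A B q c :: "'a::division_ring"
  assumes p: "p \<noteq> 0" and q: "q \<noteq> 0" and cq: "q*p = p*c*q" and hA: "A*c*p = 1+Q"
    and hB: "p*c*B = 1+q" and hq: "Q*c*q = 1 + p^4"
  shows "(A + c*B) * inverse p = inverse p * q * inverse p * inverse q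
     + (inverse p * inverse p + p*p) * inverse q + inverse p * (1+q) * inverse p"
proof -
  have c: "c = inverse p * q * p * inverse q"
    using cq p q by (simp add: mult.assoc inv_l inv_r)
  have "Q * (inverse p * q * p) = 1 + p^4" using hq q by (simp add: c mult.assoc inv_l)
  then have QQ: "Q = (1 + p^4) * (inverse p * inverse q * p)"
    by (rule solve_r[rotated]) (simp add: mult.assoc inv_l inv_r p q)
  have "A * (inverse p * q * p * inverse q * p) = 1 + Q" using hA by (simp add: c mult.assoc)
  then have A: "A = (1 + Q) * (inverse p * q * inverse p * inverse q * p)"
    by (rule solve_r[rotated]) (simp add: mult.assoc inv_l inv_r p q)
  have cB: "c*B = inverse p * (1+q)"
    by (rule solve_l[of "inverse p" p]) (use hB p in \<open>simp_all add: mult.assoc\<close>)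
  show ?thesis
    using p q unfolding A cB QQ
    by (simp add: algebra_simps inv_l inv_r power4_eq_xxxx)
qed

lemma Gstep:
  fixes p Q r c :: "'a::division_ring"
  assumes p: "p \<noteq> 0" and Q: "Q \<noteq> 0" and r: "r \<noteq> 0" and cQ: "p*Q = Q*c*p"
    and hr: "r*c*p = 1+Q"
  shows "inverse r * Q * inverse r * inverse Q
     + (inverse r * inverse r + r*r) * inverse Q + inverse r * (1+Q) * inverse r
    = (1 + inverse Q) * inverse p * Q * inverse p
     + (1 + inverse Q) * (inverse p * inverse p) + inverse Q * (p*p)"
proof -
  have c: "c = inverse Q * p * Q * inverse p"
    using cQ p Q by (simp add: mult.assoc inv_l inv_r)
  have "r * (inverse Q * p * Q) = 1 + Q" using hr p by (simp add: c mult.assoc inv_l)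
  then have rr: "r = (1 + Q) * (inverse Q * inverse p * Q)"
    by (rule solve_r[rotated]) (simp add: mult.assoc inv_l inv_r p Q)
  have "r * (inverse Q * p) = 1 + inverse Q"
    unfolding rr using p Q by (simp add: algebra_simps inv_l inv_r)
  then have key: "inverse r * (1 + inverse Q) = inverse Q * p"
    using r by (metis inv_l)
  have r2: "r * r * inverse Q = (1+inverse Q) * inverse p * (Q + 1) * inverse p"
    unfolding rr using p Q by (simp add: algebra_simps inv_l inv_r)
  have "inverse r * Q * inverse r * inverse Q
     + (inverse r * inverse r + r*r) * inverse Q + inverse r * (1+Q) * inverse r
     = inverse r * Q * (inverse r * (1 + inverse Q)) + inverse r * (inverse r * (1 + inverse Q))
       + r * r * inverse Q"
    by (simp add: algebra_simps)
  also have "\<dots> = inverse Q * p * p + r * r * inverse Q"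
  proof -
    have e: "inverse r * Q * (inverse Q * p) + inverse r * (inverse Q * p)
        = (inverse r * (1 + inverse Q)) * p" using Q by (simp add: algebra_simps inv_r)
    show ?thesis unfolding key e[unfolded key] ..
  qed
  also have "\<dots> = (1 + inverse Q) * inverse p * Q * inverse p
     + (1 + inverse Q) * (inverse p * inverse p) + inverse Q * (p*p)"
    unfolding r2 by (simp add: algebra_simps)
  finally show ?thesis .
qed

lemma fps_part:
  fixes u :: "nat \<Rightarrow> 'a::division_ring"
  assumes rec: "\<And>n. u (n+2) = (y1+y3) * u (n+1) - (y3*y1 - y2) * u n"
    and u1: "u 1 = y1 * u 0"
  shows "Abs_fps u = inverse (1 - fps_X * fps_const y1
     - fps_X^2 * inverse (1 - fps_X * fps_const y3) * fps_const y2) * fps_const (u 0)"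
proof -
  define E :: "'a fps" where "E = 1 - fps_X * fps_const y3"
  define D where "D = 1 - fps_X * fps_const y1 - fps_X^2 * inverse E * fps_const y2"
  have E0: "E $ 0 = 1" by (simp add: E_def)
  have EE: "E * inverse E = 1" "inverse E * E = 1"
    using E0 by (simp_all add: inverse_mult_eq_1 inverse_mult_eq_1')
  have X2E: "E * fps_X^2 = fps_X^2 * E" by (simp add: fps_mult_fps_X_power_commute)
  have c3X: "fps_const y3 * (fps_X * f) = fps_X * (fps_const (y3::'a) * f)" for f
    by (metis fps_mult_fps_X_commute mult.assoc)
  have F2: "E * (fps_X^2 * inverse E * fps_const y2) = fps_X^2 * fps_const y2"
  proof -
    have "E * (fps_X^2 * inverse E * fps_const y2) = (E * fps_X^2) * inverse E * fps_const y2"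
      by (simp add: mult.assoc)
    also have "\<dots> = fps_X^2 * (E * inverse E) * fps_const y2" by (simp add: X2E mult.assoc)
    finally show ?thesis by (simp add: EE)
  qed
  have F1: "E * (fps_X * fps_const y1) = fps_X * fps_const y1 - fps_X^2 * fps_const (y3*y1)"
    unfolding E_def
    by (simp add: algebra_simps power2_eq_square c3X flip: fps_const_mult)
  have "E * D = E - E * (fps_X * fps_const y1) - E * (fps_X^2 * inverse E * fps_const y2)"
    unfolding D_def by (simp add: right_diff_distrib)
  also have "\<dots> = (1 - fps_X * fps_const y3) - (fps_X * fps_const y1 - fps_X^2 * fps_const (y3*y1))
      - fps_X^2 * fps_const y2"
    unfolding F1 F2 by (simp add: E_def)
  also have "\<dots> = 1 - fps_X * fps_const (y1+y3) + fps_X^2 * fps_const (y3*y1 - y2)"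
    by (simp add: algebra_simps del: fps_const_add fps_const_sub fps_const_neg add: fps_const_add[symmetric] fps_const_sub[symmetric])
  finally have ED: "E * D = 1 - fps_X * fps_const (y1+y3) + fps_X^2 * fps_const (y3*y1 - y2)" .
  have PU: "(1 - fps_X * fps_const (y1+y3) + fps_X^2 * fps_const (y3*y1 - y2)) * Abs_fps u
      = fps_const (u 0) - fps_X * fps_const (y3 * u 0)"
  proof (rule fps_ext)
    fix n
    show "((1 - fps_X * fps_const (y1+y3) + fps_X^2 * fps_const (y3*y1 - y2)) * Abs_fps u) $ n
      = (fps_const (u 0) - fps_X * fps_const (y3 * u 0)) $ n"
    proof (cases n)
      case 0 then show ?thesis by (simp add: algebra_simps)
    next
      case (Suc m)
      show ?thesis
      proof (cases m)
        case 0 then show ?thesis using Suc u1 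
          by (simp add: algebra_simps fps_X_power_mult_nth fps_const_mult_left mult.assoc)
      next
        case (Suc k)
        then show ?thesis using \<open>n = Suc m\<close> rec[of k]
          by (simp add: algebra_simps fps_X_power_mult_nth fps_const_mult_left mult.assoc)
      qed
    qed
  qed
  have "E * (D * Abs_fps u) = E * fps_const (u 0)"
    using PU by (simp add: mult.assoc[symmetric] ED) (simp add: E_def algebra_simps flip: fps_const_mult)
  then have DU: "D * Abs_fps u = fps_const (u 0)"
    by (metis EE(2) mult.assoc mult_1_left)
  have D0: "D $ 0 = 1" by (simp add: D_def)
  then have "inverse D * D = 1" by (simp add: inverse_mult_eq_1)
  then have "Abs_fps u = inverse D * fps_const (u 0)"
    by (metis DU mult.assoc mult_1_left)
  then show ?thesis unfolding D_def E_def .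
qed



lemma fsf_all:
  assumes "free_skew_field \<phi> x y"
  shows "(\<forall>a b. \<phi> (a + b) = \<phi> a + \<phi> b) \<and> (\<forall>a b. \<phi> (a * b) = \<phi> a * \<phi> b) \<and> \<phi> 1 = 1 \<and> (\<forall>c d. \<phi> c * d = d * \<phi> c)"
    using assms unfolding free_skew_field_def by (elim conjE) (intro conjI; assumption)

lemma fsf_central:
  assumes "free_skew_field \<phi> x y"
  shows "\<phi> a * d = d * \<phi> a"
  using fsf_all[OF assms] by blast

lemma fsf_basic:
  assumes "free_skew_field \<phi> x y"
  shows "\<phi> (a+b) = \<phi> a + \<phi> b" "\<phi> (a*b) = \<phi> a * \<phi> b" "\<phi> 1 = 1"
    "\<phi> 0 = 0" "\<phi> (-a) = - \<phi> a"
proof -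
  have add: "\<And>a b. \<phi> (a+b) = \<phi> a + \<phi> b" using fsf_all[OF assms] by blast
  show "\<phi> (a+b) = \<phi> a + \<phi> b" by (rule add)
  show "\<phi> (a*b) = \<phi> a * \<phi> b" "\<phi> 1 = 1" using fsf_all[OF assms] by blast+
  show z: "\<phi> 0 = 0" using add[of 0 0] by simp
  show "\<phi> (-a) = - \<phi> a" using add[of a "-a"] z by (simp add: eq_neg_iff_add_eq_0 add.commute)
qed

lemma fsf_sqrt:
  assumes fsf: "free_skew_field \<phi> x y" and w: "w * w = \<phi> a"
  shows "\<exists>s. w = \<phi> s \<and> s * s = a"
proof -
  define s where "s = csqrt a"
  have ss: "s * s = a" by (simp add: s_def power2_eq_square[symmetric])
  have "(w - \<phi> s) * (w + \<phi> s) = w * w - \<phi> s * \<phi> s + (w * \<phi> s - \<phi> s * w)"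
    by (simp add: algebra_simps)
  also have "\<dots> = w * w - \<phi> (s * s)"
    using fsf_basic[OF fsf] fsf_central[OF fsf, of s w] by simp
  also have "\<dots> = 0" using w ss by simp
  finally have "w = \<phi> s \<or> w = - \<phi> s" by (simp add: eq_neg_iff_add_eq_0)
  then show ?thesis
  proof
    assume "w = \<phi> s" then show ?thesis using ss by blast
  next
    assume "w = - \<phi> s"
    then have "w = \<phi> (-s)" using fsf_basic(5)[OF fsf, of s] by simp
    moreover have "(-s) * (-s) = a" using ss by simp
    ultimately show ?thesis by blast
  qed
qed

lemma fsf_fourth:
  assumes fsf: "free_skew_field \<phi> x y" and w: "w ^ 4 = \<phi> a"
  shows "\<exists>t. w = \<phi> t"
proof -
  have "(w*w) * (w*w) = \<phi> a" using w by (simp add: power4_eq_xxxx mult.assoc)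
  then obtain s where "w * w = \<phi> s" using fsf_sqrt[OF fsf] by blast
  then show ?thesis using fsf_sqrt[OF fsf] by blast
qed

lemma comm_step:
  fixes a b c d :: "'a::division_ring"
  assumes ab: "a*b = b*c*a" and d: "d*c*a = 1 + b^m" and ca: "c*a \<noteq> 0"
  shows "b*d = d*c*b"
proof -
  have "(b*d) * (c*a) = b * (d*c*a)" by (simp add: mult.assoc)
  also have "\<dots> = (d*c*a) * b" unfolding d by (simp add: distrib_left distrib_right power_commutes)
  also have "\<dots> = (d*c*b) * (c*a)" by (simp add: mult.assoc ab[unfolded mult.assoc])
  finally show ?thesis using ca by simp
qed
lemma fsf_noncomm:
  assumes fsf: "free_skew_field \<phi> x y" and z: "z \<noteq> 0"
  shows "x * y \<noteq> \<phi> z * (y * x)"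
proof
  assume eq: "x * y = \<phi> z * (y * x)"
  define p :: fa where "p = (\<lambda>w. if w = [False,True] then 1 else if w = [True,False] then -z else 0)"
  have S: "{w. p w \<noteq> 0} = {[False,True],[True,False]}" using z by (auto simp: p_def)
  have poly: "fa_poly p" unfolding fa_poly_def S by simp
  have full: "fa_full 1 (\<lambda>i j. p)"
    unfolding fa_full_def
  proof
    assume "\<exists>r<(1::nat). \<exists>(P::nat \<Rightarrow> nat \<Rightarrow> fa) (Q::nat \<Rightarrow> nat \<Rightarrow> fa). (\<forall>i j. fa_poly (P i j)) \<and> (\<forall>i j. fa_poly (Q i j)) \<and>
      (\<forall>i<1. \<forall>j<1. \<forall>w. p w = (\<Sum>k<r. fa_mult (P i k) (Q k j) w))"
    then obtain r :: nat and P Q :: "nat \<Rightarrow> nat \<Rightarrow> fa" where r: "r<1"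
      and h: "\<forall>i::nat<1. \<forall>j::nat<1. \<forall>w. p w = (\<Sum>k<r. fa_mult (P i k) (Q k j) w)"
      by (elim exE conjE) (rule that; assumption)
    have "p [False,True] = 0" using r h[rule_format, of 0 0 "[False,True]"] by simp
    then show False by (simp add: p_def)
  qed
  have inv: "\<forall>n M. (\<forall>i<n. \<forall>j<n. fa_poly (M i j)) \<and> fa_full n M \<longrightarrow>
        mat_invertible n (\<lambda>i j. fa_eval \<phi> x y (M i j))"
    using fsf unfolding free_skew_field_def by (elim conjE) assumption
  have "mat_invertible 1 (\<lambda>i j. fa_eval \<phi> x y p)"
    using inv[rule_format, of 1 "\<lambda>i j. p"] poly full by simp
  then obtain B where "fa_eval \<phi> x y p * B 0 0 = 1"
    unfolding mat_invertible_def by auto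
  moreover have "fa_eval \<phi> x y p = x * y - \<phi> z * (y * x)"
    unfolding fa_eval_def S using fsf_basic[OF fsf]
    by (simp add: p_def word_eval_def)
  ultimately show False using eq by simp
qed



theorem theorem4p3:
  fixes \<phi> :: "complex \<Rightarrow> 'a::division_ring" and x y :: 'a and R :: "int \<Rightarrow> 'a"
  assumes "free_skew_field \<phi> x y"
    and "\<forall>n. R (2*n) * (x * y * inverse x * inverse y) * R (2*n - 2) = 1 + R (2*n - 1)"
    and "\<forall>n. R (2*n + 1) * (x * y * inverse x * inverse y) * R (2*n - 1) = 1 + R (2*n) ^ 4"
    and "R 0 = y * x * inverse y"
    and "R 1 = y"
  shows "Abs_fps (\<lambda>n. R (2 * int n)) =
    inverse (1 - fps_X * fps_const ((1 + y) * inverse x * y * inverse x * inverse y)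
      - fps_X ^ 2 * inverse (1 - fps_X * fps_const ((x ^ 3 + (1 + y) * inverse x) * inverse x * inverse y))
          * fps_const ((x ^ 2 + (1 + y) * inverse x ^ 2 * (1 + y)) * inverse y * inverse x * y * inverse x * inverse y))
    * fps_const (R 0)"
proof -
  note fsf = assms(1)
  define c where "c = x * y * inverse x * inverse y"
  have h1: "\<forall>n. R (2*n) * c * R (2*n - 2) = 1 + R (2*n - 1)" using assms(2) unfolding c_def .
  have h2: "\<forall>n. R (2*n + 1) * c * R (2*n - 1) = 1 + R (2*n) ^ 4" using assms(3) unfolding c_def .
  have phi1: "\<phi> 1 = 1" by (rule fsf_basic(3)[OF fsf])
  have xy1: "x * y \<noteq> y * x" using fsf_noncomm[OF fsf, of 1] phi1 by simp
  have x0: "x \<noteq> 0" using xy1 by auto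
  have y0: "y \<noteq> 0" using xy1 by auto
  have cyx: "c * (y * x) = x * y" unfolding c_def using x0 y0 by (simp add: mult.assoc inv_l)
  have cnot: "c \<noteq> \<phi> z" if z: "z \<noteq> 0" for z
  proof
    assume e: "c = \<phi> z"
    then show False using fsf_noncomm[OF fsf z] cyx by simp
  qed
  have c0: "c \<noteq> 0" unfolding c_def using x0 y0 by simp
  have c1: "c \<noteq> 1" using cnot[of 1] phi1 by simp
  have H1I: "R a * c * R b = 1 + R d" if "a = 2*m+2" "b = 2*m" "d = 2*m+1" for a b d m
  proof -
    have e: "2*(m+1) = 2*m+2" "2*m+2-2 = 2*m" "2*m+2-1 = 2*m+1" by simp_all
    show ?thesis using h1[rule_format, of "m+1"] unfolding e that .
  qed
  have H2I: "R a * c * R b = 1 + R d ^ 4" if "a = 2*m+1" "b = 2*m-1" "d = 2*m" for a b d m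
    using h2[rule_format, of m] unfolding that .
  have H2I': "R a * c * R b = 1 + R d ^ 4" if "a = 2*m+3" "b = 2*m+1" "d = 2*m+2" for a b d m
  proof -
    have e: "2*(m+1) = 2*m+2" "2*m+2+1 = 2*m+3" "2*m+2-1 = 2*m+1" by simp_all
    show ?thesis using h2[rule_format, of "m+1"] unfolding e that .
  qed
  have neg1: "t = -1" if "1 + t = 0" for t :: 'a
    using that by (simp add: eq_neg_iff_add_eq_0 add.commute)
  have even: "R (2*m) \<noteq> 0" for m
  proof
    assume z: "R (2*m) = 0"
    have "1 + R (2*m+1) = 0" using H1I[of "2*m+2" m "2*m" "2*m+1"] z by simp
    then have a: "R (2*m+1) = -1" by (rule neg1)
    have "R (2*m+1) * c * R (2*m-1) = 1" using H2I[of "2*m+1" m "2*m-1" "2*m"] z by simp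
    then have "- (c * R (2*m-1)) = 1" using a by (simp add: mult.assoc)
    then have b: "c * R (2*m-1) = -1" by (metis minus_minus)
    have "1 + R (2*m-1) = 0" using h1[rule_format, of m] z by simp
    then have "R (2*m-1) = -1" by (rule neg1)
    then show False using b c1 by simp
  qed
  have odd: "R (2*m+1) \<noteq> 0" for m
  proof
    assume z: "R (2*m+1) = 0"
    have phim1: "\<phi> (-1) = -1" using fsf_basic(5)[OF fsf, of 1] phi1 by simp
    have "1 + R (2*m) ^ 4 = 0" using H2I[of "2*m+1" m "2*m-1" "2*m"] z by simp
    then have "R (2*m) ^ 4 = \<phi> (-1)" using phim1 by (simp add: neg1)
    then obtain t where t: "R (2*m) = \<phi> t" using fsf_fourth[OF fsf] by blast
    have "1 + R (2*m+2) ^ 4 = 0" using H2I'[of "2*m+3" m "2*m+1" "2*m+2"] z by simp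
    then have "R (2*m+2) ^ 4 = \<phi> (-1)" using phim1 by (simp add: neg1)
    then obtain t' where t': "R (2*m+2) = \<phi> t'" using fsf_fourth[OF fsf] by blast
    have "R (2*m+2) * c * R (2*m) = 1" using H1I[of "2*m+2" m "2*m" "2*m+1"] z by simp
    then have "\<phi> t' * c * \<phi> t = 1" using t t' by simp
    then have e: "c * \<phi> (t' * t) = 1"
      using fsf_central[OF fsf, of t' c] fsf_basic(2)[OF fsf, of t' t] by (simp add: mult.assoc)
    then have tt: "t' * t \<noteq> 0" using fsf_basic(4)[OF fsf] by auto
    have "\<phi> (t' * t) * \<phi> (inverse (t' * t)) = \<phi> ((t' * t) * inverse (t' * t))"
      by (rule fsf_basic(2)[OF fsf, symmetric])
    also have "\<dots> = 1" using right_inverse[OF tt] phi1 by (simp only:)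
    finally have "\<phi> (t' * t) * \<phi> (inverse (t' * t)) = 1" .
    then have "c = \<phi> (inverse (t' * t))"
      using e by (metis mult.assoc mult_1_left mult_1_right)
    moreover have "inverse (t' * t) \<noteq> 0" using tt by simp
    ultimately show False using cnot by blast
  qed
  have NZ: "R k \<noteq> 0" for k
  proof -
    have "\<exists>m. k = 2*m \<or> k = 2*m+1" by presburger
    then obtain m where "k = 2*m \<or> k = 2*m+1" by blast
    then show ?thesis using even odd by auto
  qed
  have Uni: "\<exists>m::nat. R (k+2) * c * R k = 1 + R (k+1) ^ m" for k
  proof -
    have "\<exists>j. k = 2*j \<or> k = 2*j+1" by presburger
    then obtain j where "k = 2*j \<or> k = 2*j+1" by blast
    then show ?thesis
    proof
      assume k: "k = 2*j"
      show ?thesis using H1I[of "k+2" j k "k+1"] k by (intro exI[of _ 1]) simp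
    next
      assume k: "k = 2*j+1"
      show ?thesis using H2I'[of "k+2" j k "k+1"] k by (intro exI[of _ 4]) simp
    qed
  qed
  have Comm: "R (int n) * R (int n + 1) = R (int n + 1) * c * R (int n)" for n :: nat
  proof (induction n)
    case 0
    show ?case using assms(4,5) x0 y0 by (simp add: c_def mult.assoc inv_l)
  next
    case (Suc n)
    obtain m where "R (int n + 2) * c * R (int n) = 1 + R (int n + 1) ^ m" using Uni by blast
    from comm_step[OF Suc.IH this] c0 NZ
    have "R (int n + 1) * R (int n + 2) = R (int n + 2) * c * R (int n + 1)" by simp
    moreover have "int (Suc n) = int n + 1" "int n + 1 + 1 = int n + 2" by simp_all
    ultimately show ?case by (simp only:)
  qed
  have CommI: "R k * R j = R j * c * R k" if "k \<ge> 0" "j = k + 1" for k j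
  proof -
    have e: "int (nat k) = k" using that(1) by simp
    show ?thesis using Comm[of "nat k"] unfolding e that(2) .
  qed
  define G where "G p Q = (1 + inverse Q) * inverse p * Q * inverse p
     + (1 + inverse Q) * (inverse p * inverse p) + inverse Q * (p*p)" for p Q :: 'a
  define a where "a = G (R 0) (R 1)"
  have F: "R(2*m+2)*R(2*m+3) = R(2*m+3)*c*R(2*m+2)"
    "R(2*m+1)*R(2*m+2) = R(2*m+2)*c*R(2*m+1)"
    "R(2*m)*R(2*m+1) = R(2*m+1)*c*R(2*m)"
    "R(2*m+4)*c*R(2*m+2) = 1 + R(2*m+3)"
    "R(2*m+2)*c*R(2*m) = 1 + R(2*m+1)"
    "R(2*m+3)*c*R(2*m+1) = 1 + R(2*m+2)^4" if "m \<ge> 0" for m :: int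
  proof -
    show "R(2*m+2)*R(2*m+3) = R(2*m+3)*c*R(2*m+2)" by (rule CommI) (use that in simp_all)
    show "R(2*m+1)*R(2*m+2) = R(2*m+2)*c*R(2*m+1)" by (rule CommI) (use that in simp_all)
    show "R(2*m)*R(2*m+1) = R(2*m+1)*c*R(2*m)" by (rule CommI) (use that in simp_all)
    show "R(2*m+4)*c*R(2*m+2) = 1 + R(2*m+3)" by (rule H1I[of _ "m+1"]) simp_all
    show "R(2*m+2)*c*R(2*m) = 1 + R(2*m+1)" by (rule H1I[of _ m]) simp_all
    show "R(2*m+3)*c*R(2*m+1) = 1 + R(2*m+2)^4" by (rule H2I'[of _ m]) simp_all
  qed
  have KGn: "(R (2*int n+4) + c * R (2*int n)) * inverse (R (2*int n+2))
      = G (R (2*int n+2)) (R (2*int n+3))" for n :: nat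
    unfolding G_def using F[of "int n"] by (intro KG NZ) simp_all
  have Inv: "G (R (2*int n)) (R (2*int n+1)) = a" for n :: nat
  proof (induction n)
    case 0 show ?case by (simp add: a_def)
  next
    case (Suc n)
    let ?m = "int n"
    have k1: "(R (2*?m+4) + c * R (2*?m)) * inverse (R (2*?m+2))
      = inverse (R (2*?m+2)) * R (2*?m+1) * inverse (R (2*?m+2)) * inverse (R (2*?m+1))
     + (inverse (R (2*?m+2)) * inverse (R (2*?m+2)) + R (2*?m+2) * R (2*?m+2)) * inverse (R (2*?m+1))
     + inverse (R (2*?m+2)) * (1 + R (2*?m+1)) * inverse (R (2*?m+2))"
      using F[of ?m] by (intro KG' NZ) simp_all
    have k2: "inverse (R (2*?m+2)) * R (2*?m+1) * inverse (R (2*?m+2)) * inverse (R (2*?m+1))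
     + (inverse (R (2*?m+2)) * inverse (R (2*?m+2)) + R (2*?m+2) * R (2*?m+2)) * inverse (R (2*?m+1))
     + inverse (R (2*?m+2)) * (1 + R (2*?m+1)) * inverse (R (2*?m+2))
      = G (R (2*?m)) (R (2*?m+1))" unfolding G_def
      using F[of ?m] by (intro Gstep NZ) simp_all
    have "G (R (2*?m+2)) (R (2*?m+3)) = a" using KGn[of n] k1 k2 Suc.IH by simp
    moreover have "2 * int (Suc n) = 2*?m+2" "2 * int (Suc n) + 1 = 2*?m+3" by simp_all
    ultimately show ?case by (simp only:)
  qed
  have Rec: "R (2*int n+4) = a * R (2*int n+2) - c * R (2*int n)" for n :: nat
  proof -
    have "2 * int (Suc n) = 2*int n+2" "2 * int (Suc n) + 1 = 2*int n+3" by simp_all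
    then have "(R (2*int n+4) + c * R (2*int n)) * inverse (R (2*int n+2)) = a"
      using KGn[of n] Inv[of "Suc n"] by (simp only:)
    then have "R (2*int n+4) + c * R (2*int n) = a * R (2*int n+2)"
      by (rule solve_r[OF left_inverse[OF NZ]])
    then show ?thesis by (simp add: algebra_simps)
  qed
  define Y1 where "Y1 = (1 + y) * inverse x * y * inverse x * inverse y"
  define Y3 where "Y3 = (x ^ 3 + (1 + y) * inverse x) * inverse x * inverse y"
  define Y2 where "Y2 = (x ^ 2 + (1 + y) * inverse x ^ 2 * (1 + y)) * inverse y * inverse x * y * inverse x * inverse y"
  have iR0: "inverse (R 0) = y * inverse x * inverse y"
    unfolding assms(4) by (rule inverse_unique) (simp add: mult.assoc inv_l inv_r x0 y0)
  have aeq: "a = Y1 + Y3"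
    unfolding a_def G_def iR0 assms(5) Y1_def Y3_def
    by (simp add: assms(4) algebra_simps inv_l inv_r x0 y0 power2_eq_square power3_eq_cube)
  have ceq: "Y3 * Y1 - Y2 = c"
    unfolding Y1_def Y2_def Y3_def c_def
    by (simp add: algebra_simps inv_l inv_r x0 y0 power2_eq_square power3_eq_cube)
  have cR0: "c * R 0 = x" unfolding c_def assms(4) using x0 y0 by (simp add: mult.assoc inv_l)
  have "R 2 * c * R 0 = 1 + R 1" by (rule H1I[of _ 0]) simp_all
  then have "R 2 * x = 1 + y" using cR0 assms(5) by (simp add: mult.assoc)
  then have R2: "R 2 = (1 + y) * inverse x" by (rule solve_r[OF right_inverse[OF x0]])
  have u1: "R (2 * int 1) = Y1 * R (2 * int 0)"
    unfolding Y1_def using R2 assms(4) x0 y0 by (simp add: mult.assoc inv_l)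
  have rec: "R (2 * int (n + 2)) = (Y1 + Y3) * R (2 * int (n + 1)) - (Y3 * Y1 - Y2) * R (2 * int n)" for n
  proof -
    have e: "2 * int (n + 2) = 2 * int n + 4" "2 * int (n + 1) = 2 * int n + 2" by simp_all
    show ?thesis unfolding e aeq[symmetric] ceq by (rule Rec)
  qed
  have "Abs_fps (\<lambda>n. R (2 * int n)) = inverse (1 - fps_X * fps_const Y1
     - fps_X^2 * inverse (1 - fps_X * fps_const Y3) * fps_const Y2) * fps_const (R (2 * int 0))"
    by (rule fps_part[where u = "\<lambda>n. R (2 * int n)", OF rec u1])
  moreover have "2 * int 0 = (0::int)" by simp
  ultimately show ?thesis unfolding Y1_def Y2_def Y3_def by (simp only:)
qed

end
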